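(* The group $\mathsf{Aut}$ of all affine bijections $\mathcal{G}_N\to\mathcal{G}_N$ is finite, and every $\sigma\in\mathsf{Aut}$ is completely determined by its restriction to $\mathcal{I}$.
   Context: $\mathcal{G}_N$ is the set of real symmetric positive semi-definite $N\times N$ matrices with unit diagonal; $\mathcal{I}$ is the set of Ising matrices $\mathbf{s}\mathbf{s}^\top$, $\mathbf{s}\in\{\pm1\}^N$. *)

theory Defs
  imports "HOL-Analysis.Analysis"
begin

text \<open>Elliptope G_N: real symmetric PSD N x N matrices with unit diagonal.
  N is the cardinality of the finite index type 'n.\<close>
definition elliptope :: "(real^'n^'n) set" where
  "elliptope = {X. transpose X = X \<and> (\<forall>x. 0 \<le> x \<bullet> (X *v x)) \<and> (\<forall>i. X $ i $ i = 1)}"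

definition ising :: "(real^'n^'n) set" where
  "ising = {X. \<exists>s::real^'n. (\<forall>i. s $ i = 1 \<or> s $ i = -1) \<and> X = (\<chi> i j. s $ i * s $ j)}"

definition affine_map_on :: "'a::real_vector set \<Rightarrow> ('a \<Rightarrow> 'b::real_vector) \<Rightarrow> bool" where
  "affine_map_on S f \<longleftrightarrow> (\<forall>x\<in>S. \<forall>y\<in>S. \<forall>t::real. 0 \<le> t \<and> t \<le> 1 \<longrightarrow>
      f ((1 - t) *\<^sub>R x + t *\<^sub>R y) = (1 - t) *\<^sub>R f x + t *\<^sub>R f y)"

text \<open>Aut: affine bijections G_N -> G_N, represented as extensional functions
  (value undefined outside G_N), so that distinct elements are distinct maps on G_N.\<close>
definition Aut :: "(real^'n^'n \<Rightarrow> real^'n^'n) set" where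
  "Aut = {f. f \<in> extensional elliptope \<and> bij_betw f elliptope elliptope \<and> affine_map_on elliptope f}"

end

theory Submission
  imports Defs
begin


abbreviation Cm :: "real^'n^'n" where "Cm \<equiv> mat 1"

lemma qf_sum: "(x::real^'n) \<bullet> (A *v x) = (\<Sum>a\<in>UNIV. \<Sum>b\<in>UNIV. x$a * A$a$b * x$b)"
  by (simp add: inner_vec_def matrix_vector_mult_def sum_distrib_left mult.assoc mult.left_commute)

lemma elliptopeD:
  assumes "X \<in> elliptope"
  shows "transpose X = X" "\<And>x. 0 \<le> x \<bullet> (X *v x)" "\<And>i. X$i$i = 1"
  using assms by (auto simp: elliptope_def)

lemma sym_entry: "transpose X = X \<Longrightarrow> X$i$j = X$j$i"
  by (metis transpose_def vec_lambda_beta)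

lemma qf2: "(p *\<^sub>R axis a 1 + q *\<^sub>R axis b 1) \<bullet> (X *v (p *\<^sub>R axis a 1 + q *\<^sub>R axis b 1))
   = p*p*X$a$a + p*q*X$a$b + q*p*X$b$a + q*q*X$b$b"
  by (simp add: matrix_vector_right_distrib matrix_vector_mult_basis inner_add_left inner_add_right
       inner_axis' column_def algebra_simps matrix_scaleR_vector_ac[symmetric])

lemma entry_bound:
  assumes "X \<in> elliptope" shows "\<bar>X$i$j\<bar> \<le> 1"
proof -
  have s: "X$j$i = X$i$j" using elliptopeD(1)[OF assms] by (metis sym_entry)
  have d: "X$i$i = 1" "X$j$j = 1" using elliptopeD(3)[OF assms] by auto
  have "0 \<le> (1 *\<^sub>R axis i 1 + 1 *\<^sub>R axis j 1) \<bullet> (X *v (1 *\<^sub>R axis i 1 + 1 *\<^sub>R axis j 1))"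
    using elliptopeD(2)[OF assms] by blast
  hence 1: "0 \<le> 2 + 2*X$i$j" unfolding qf2 using s d by simp
  have "0 \<le> (1 *\<^sub>R axis i 1 + (-1) *\<^sub>R axis j 1) \<bullet> (X *v (1 *\<^sub>R axis i 1 + (-1) *\<^sub>R axis j 1))"
    using elliptopeD(2)[OF assms] by blast
  hence 2: "0 \<le> 2 - 2*X$i$j" unfolding qf2 using s d by simp
  show ?thesis using 1 2 by linarith
qed

lemma qf_lin: "(x::real^'n) \<bullet> ((a *\<^sub>R A + b *\<^sub>R B) *v x) = a * (x \<bullet> (A *v x)) + b * (x \<bullet> (B *v x))"
  unfolding qf_sum by (simp add: sum_distrib_left sum.distrib algebra_simps)

lemma convex_elliptope: "convex elliptope"
  unfolding convex_def
proof (intro ballI allI impI)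
  fix X Y :: "real^'n^'n" and u v :: real
  assume X: "X \<in> elliptope" and Y: "Y \<in> elliptope" and uv: "0 \<le> u" "0 \<le> v" "u + v = 1"
  show "u *\<^sub>R X + v *\<^sub>R Y \<in> elliptope"
    unfolding elliptope_def
  proof (intro CollectI conjI allI)
    show "transpose (u *\<^sub>R X + v *\<^sub>R Y) = u *\<^sub>R X + v *\<^sub>R Y"
      using elliptopeD(1)[OF X] elliptopeD(1)[OF Y]
      by (simp add: transpose_def vec_eq_iff)
    fix x :: "real^'n"
    show "0 \<le> x \<bullet> ((u *\<^sub>R X + v *\<^sub>R Y) *v x)"
      unfolding qf_lin using elliptopeD(2)[OF X] elliptopeD(2)[OF Y] uv by simp
  next
    fix i show "(u *\<^sub>R X + v *\<^sub>R Y)$i$i = 1"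
      using elliptopeD(3)[OF X] elliptopeD(3)[OF Y] uv by simp
  qed
qed

definition Sm :: "'n \<Rightarrow> 'n \<Rightarrow> real^'n^'n" where
  "Sm i j = (\<chi> a b. if i \<noteq> j \<and> (a = i \<and> b = j \<or> a = j \<and> b = i) then 1/2 else 0)"

lemma Sm_entry: "Sm i j $a$b = (if i \<noteq> j \<and> a = i \<and> b = j then 1/2 else 0) + (if i \<noteq> j \<and> a = j \<and> b = i then 1/2 else 0)"
  by (auto simp: Sm_def)

lemma Sm_qf: "(x::real^'n) \<bullet> (Sm i j *v x) = (if i = j then 0 else x$i * x$j)"
proof (cases "i = j")
  case True thus ?thesis unfolding qf_sum by (simp add: Sm_def)
next
  case False
  have e: "\<And>a b. x$a * Sm i j$a$b * x$b = (if b = j then (if a = i then x$i*x$j/2 else 0) else 0) + (if b = i then (if a = j then x$i*x$j/2 else 0) else 0)"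
    using False by (auto simp: Sm_def)
  show ?thesis unfolding qf_sum e using False
    by (simp add: sum.distrib sum.delta)
qed

lemma Sm_sym: "transpose (Sm i j) = Sm i j"
  by (auto simp: vec_eq_iff transpose_def Sm_def)

lemma Sm_diag: "Sm i j $a$a = 0"
  by (auto simp: Sm_def)

lemma sumsq_ge: fixes x :: "real^'n" assumes "i \<noteq> j" shows "x$i * x$i + x$j * x$j \<le> x \<bullet> x"
proof -
  have "(\<Sum>a\<in>{i,j}. x$a * x$a) \<le> (\<Sum>a\<in>UNIV. x$a * x$a)"
    by (rule sum_mono2) auto
  thus ?thesis using assms by (simp add: inner_vec_def)
qed

lemma CS_in:
  assumes "\<bar>c\<bar> \<le> 1" shows "Cm + c *\<^sub>R Sm i j \<in> (elliptope :: (real^'n^'n) set)"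
  unfolding elliptope_def
proof (intro CollectI conjI allI)
  show "transpose (Cm + c *\<^sub>R Sm i j) = Cm + c *\<^sub>R Sm i j"
    using Sm_sym[of i j] by (simp add: vec_eq_iff transpose_def mat_def Sm_def)
  fix x :: "real^'n"
  have e: "Cm + c *\<^sub>R Sm i j = 1 *\<^sub>R Cm + c *\<^sub>R Sm i j" by simp
  have "0 \<le> x \<bullet> x + c * (if i = j then 0 else x$i * x$j)"
  proof (cases "i = j")
    case False
    have "0 \<le> x$i * x$i + x$j * x$j + c * (x$i * x$j)"
    proof -
      have "\<bar>c\<bar> * \<bar>x$i * x$j\<bar> \<le> 1 * \<bar>x$i * x$j\<bar>"
        by (rule mult_right_mono) (use assms in auto)
      hence "\<bar>c * (x$i * x$j)\<bar> \<le> \<bar>x$i * x$j\<bar>" by (simp add: abs_mult)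
      moreover have "2 * \<bar>x$i * x$j\<bar> \<le> x$i * x$i + x$j * x$j"
      proof -
        have "0 \<le> (\<bar>x$i\<bar> - \<bar>x$j\<bar>) * (\<bar>x$i\<bar> - \<bar>x$j\<bar>)" by simp
        hence "2 * (\<bar>x$i\<bar> * \<bar>x$j\<bar>) \<le> \<bar>x$i\<bar> * \<bar>x$i\<bar> + \<bar>x$j\<bar> * \<bar>x$j\<bar>"
          by (simp add: algebra_simps)
        thus ?thesis by (simp add: abs_mult)
      qed
      ultimately show ?thesis by linarith
    qed
    thus ?thesis using sumsq_ge[OF False, of x] False by simp
  qed simp
  thus "0 \<le> x \<bullet> ((Cm + c *\<^sub>R Sm i j) *v x)"
    by (subst e, subst qf_lin) (simp add: Sm_qf)
next
  fix a show "(Cm + c *\<^sub>R Sm i j) $ a $ a = 1" by (simp add: Sm_diag mat_def)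
qed

lemma decomp:
  fixes D :: "real^'n^'n"
  assumes "transpose D = D" "\<And>i. D$i$i = 0"
  shows "(\<Sum>i\<in>UNIV. \<Sum>j\<in>UNIV. D$i$j *\<^sub>R Sm i j) = D"
proof -
  have s: "\<And>a b. D$b$a = D$a$b" using assms(1) by (metis sym_entry)
  show ?thesis
    unfolding vec_eq_iff
  proof (intro allI)
    fix a b
    show "(\<Sum>i\<in>UNIV. \<Sum>j\<in>UNIV. D$i$j *\<^sub>R Sm i j) $ a $ b = D $ a $ b"
    proof -
      have e: "\<And>i j. D$i$j * Sm i j$a$b = (if j = b then (if i = a then (if a \<noteq> b then D$a$b/2 else 0) else 0) else 0) + (if j = a then (if i = b then (if a \<noteq> b then D$b$a/2 else 0) else 0) else 0)"
        by (auto simp: Sm_def)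
      show ?thesis using s[of a b] assms(2)[of a]
        by (cases "a = b") (simp add: sum_component Sm_diag, simp add: sum_component e sum.distrib)
    qed
  qed
qed



lemma affine_sum:
  fixes f :: "'a::real_vector \<Rightarrow> 'b::real_vector"
  assumes S: "convex S" and f: "affine_map_on S f" and A: "finite A"
  shows "sum u A = 1 \<Longrightarrow> (\<forall>a\<in>A. 0 \<le> u a) \<Longrightarrow> (\<forall>a\<in>A. x a \<in> S) \<Longrightarrow>
    f (\<Sum>a\<in>A. u a *\<^sub>R x a) = (\<Sum>a\<in>A. u a *\<^sub>R f (x a))"
  using A
proof (induction A arbitrary: u rule: finite_induct)
  case empty thus ?case by simp
next
  case (insert a A)
  define s where "s = sum u A"
  have s0: "0 \<le> s" unfolding s_def using insert.prems(2) by (simp add: sum_nonneg)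
  have ua: "u a = 1 - s" using insert.prems(1) insert.hyps unfolding s_def by simp
  have ua0: "0 \<le> u a" using insert.prems(2) by simp
  show ?case
  proof (cases "s = 0")
    case True
    hence z: "\<forall>b\<in>A. u b = 0" unfolding s_def using insert.prems(2) insert.hyps(1)
      by (subst (asm) sum_nonneg_eq_0_iff) auto
    hence "(\<Sum>b\<in>A. u b *\<^sub>R x b) = 0" "(\<Sum>b\<in>A. u b *\<^sub>R f (x b)) = 0" by auto
    thus ?thesis using insert.hyps ua True by simp
  next
    case False
    hence sp: "0 < s" using s0 by simp
    define v where "v b = u b / s" for b
    have v1: "sum v A = 1" unfolding v_def using sp s_def by (simp add: sum_divide_distrib[symmetric])
    have v0: "\<forall>b\<in>A. 0 \<le> v b" unfolding v_def using insert.prems(2) sp by simp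
    have vx: "\<forall>b\<in>A. x b \<in> S" using insert.prems(3) by simp
    have IH: "f (\<Sum>b\<in>A. v b *\<^sub>R x b) = (\<Sum>b\<in>A. v b *\<^sub>R f (x b))"
      using insert.IH[OF v1 v0 vx] .
    have yS: "(\<Sum>b\<in>A. v b *\<^sub>R x b) \<in> S"
      using convex_sum[OF insert.hyps(1) S v1] v0 vx by auto
    have e1: "(\<Sum>b\<in>A. u b *\<^sub>R x b) = s *\<^sub>R (\<Sum>b\<in>A. v b *\<^sub>R x b)"
      unfolding v_def scaleR_sum_right using sp by (intro sum.cong) auto
    have e2: "(\<Sum>b\<in>A. u b *\<^sub>R f (x b)) = s *\<^sub>R (\<Sum>b\<in>A. v b *\<^sub>R f (x b))"
      unfolding v_def scaleR_sum_right using sp by (intro sum.cong) auto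
    have s1: "s \<le> 1" using ua ua0 by simp
    have xa: "x a \<in> S" using insert.prems(3) by simp
    have "f ((1 - s) *\<^sub>R x a + s *\<^sub>R (\<Sum>b\<in>A. v b *\<^sub>R x b)) =
          (1 - s) *\<^sub>R f (x a) + s *\<^sub>R f (\<Sum>b\<in>A. v b *\<^sub>R x b)"
      using f xa yS s0 s1 unfolding affine_map_on_def by blast
    thus ?thesis using insert.hyps ua e1 e2 IH by simp
  qed
qed

lemma aff_at: "affine_map_on S f \<Longrightarrow> x\<in>S \<Longrightarrow> y\<in>S \<Longrightarrow> 0 \<le> t \<Longrightarrow> t \<le> 1 \<Longrightarrow>
   f ((1 - t) *\<^sub>R x + t *\<^sub>R y) = (1 - t) *\<^sub>R f x + t *\<^sub>R f y"
  by (simp add: affine_map_on_def)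

lemma vec_alg1: "(c * 2) *\<^sub>R (a::'b::real_vector) + y = a + (c *\<^sub>R a + c *\<^sub>R b) \<Longrightarrow> c *\<^sub>R a + y = a + c *\<^sub>R b"
proof -
  assume h: "(c * 2) *\<^sub>R (a::'b::real_vector) + y = a + (c *\<^sub>R a + c *\<^sub>R b)"
  have "(c * 2) *\<^sub>R a = c *\<^sub>R a + c *\<^sub>R a" by (simp add: scaleR_left_distrib[symmetric])
  with h have "c *\<^sub>R a + (c *\<^sub>R a + y) = c *\<^sub>R a + (a + c *\<^sub>R b)" by (simp add: add.assoc add.left_commute)
  thus ?thesis by simp
qed

lemma Cm_in: "(Cm :: real^'n^'n) \<in> elliptope"
  using CS_in[of 0] by simp

lemma hom_S:
  assumes f: "affine_map_on elliptope f" and c: "\<bar>c\<bar> \<le> 1"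
  shows "f (Cm + c *\<^sub>R Sm i j) = f Cm + c *\<^sub>R (f (Cm + Sm i j) - f (Cm :: real^'n^'n))"
proof -
  define P where "P = (Cm :: real^'n^'n) + Sm i j"
  define Q where "Q = (Cm :: real^'n^'n) + (-1) *\<^sub>R Sm i j"
  have P: "P \<in> elliptope" unfolding P_def using CS_in[of 1 i j] by simp
  have Q: "Q \<in> elliptope" unfolding Q_def using CS_in[of "-1" i j] by simp
  have e: "Cm = (1 - 1/2) *\<^sub>R P + (1/2::real) *\<^sub>R Q" unfolding P_def Q_def by (simp add: vec_eq_iff algebra_simps)
  have "f Cm = (1 - 1/2) *\<^sub>R f P + (1/2::real) *\<^sub>R f Q"
    by (subst e, rule aff_at[OF f P Q]) auto
  hence fQ: "f Q = 2 *\<^sub>R f Cm - f P" by (simp add: algebra_simps)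
  show ?thesis
  proof (cases "0 \<le> c")
    case True
    have e: "Cm + c *\<^sub>R Sm i j = (1 - c) *\<^sub>R Cm + c *\<^sub>R P" unfolding P_def by (simp add: algebra_simps)
    have A1: "f (Cm + c *\<^sub>R Sm i j) = (1 - c) *\<^sub>R f Cm + c *\<^sub>R f P"
      by (subst e, rule aff_at[OF f Cm_in P]) (use True c in auto)
    show ?thesis using A1 unfolding P_def by (simp add: algebra_simps)
  next
    case False
    have e: "Cm + c *\<^sub>R Sm i j = (1 - (-c)) *\<^sub>R Cm + (-c) *\<^sub>R Q" unfolding Q_def by (simp add: algebra_simps)
    have A1: "f (Cm + c *\<^sub>R Sm i j) = (1 - (-c)) *\<^sub>R f Cm + (-c) *\<^sub>R f Q"
      by (subst e, rule aff_at[OF f Cm_in Q]) (use False c in auto)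
    have "f (Cm + c *\<^sub>R Sm i j) = (1 - (-c)) *\<^sub>R f Cm + (-c) *\<^sub>R (2 *\<^sub>R f Cm - f P)"
      using A1 fQ by simp
    hence "(c * 2) *\<^sub>R f Cm + f (Cm + c *\<^sub>R Sm i j) = f Cm + (c *\<^sub>R f Cm + c *\<^sub>R f (Cm + Sm i j))"
      unfolding P_def by (simp add: algebra_simps)
    thus ?thesis by (drule_tac vec_alg1) (simp add: algebra_simps)
  qed
qed



lemma vec_alg2:
  fixes a y z :: "'b::real_vector"
  assumes e: "e \<noteq> 0" and h: "(1 - e) *\<^sub>R a + e *\<^sub>R y = a + e *\<^sub>R z"
  shows "y = a + z"
proof -
  have "(1 - e) *\<^sub>R a = a - e *\<^sub>R a" by (simp add: scaleR_diff_left)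
  with h have "e *\<^sub>R y = e *\<^sub>R (a + z)" by (simp add: algebra_simps)
  thus ?thesis using e by simp
qed

lemma lin_ext:
  fixes f :: "real^'n^'n \<Rightarrow> 'b::real_vector"
  assumes f: "affine_map_on elliptope f"
  shows "\<exists>L. linear L \<and> (\<forall>X\<in>elliptope. f X = f Cm + L (X - Cm))"
proof -
  define L where "L D = (\<Sum>i\<in>UNIV. \<Sum>j\<in>UNIV. D$i$j *\<^sub>R (f (Cm + Sm i j) - f Cm))" for D :: "real^'n^'n"
  have lin: "linear L" unfolding L_def
    by (rule linearI) (simp_all add: scaleR_add_left sum.distrib scaleR_sum_right)
  moreover have "\<forall>X\<in>elliptope. f X = f Cm + L (X - Cm)"
  proof
    fix X :: "real^'n^'n" assume X: "X \<in> elliptope"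
    define D where "D = X - Cm"
    define M where "M = real (CARD('n) * CARD('n))"
    define e where "e = 1 / M"
    have c0: "0 < CARD('n)" by simp
    hence "1 \<le> CARD('n) * CARD('n)" by (metis One_nat_def Suc_leI nat_0_less_mult_iff)
    hence M1: "1 \<le> M" unfolding M_def by linarith
    have e0: "0 < e" and e1: "e \<le> 1" unfolding e_def using M1 by auto
    have eM: "M * e = 1" unfolding e_def using M1 by simp
    have sx: "\<And>i j. X$j$i = X$i$j" using elliptopeD(1)[OF X] by (metis sym_entry)
    have Dsym: "transpose D = D"
      unfolding D_def by (simp add: vec_eq_iff transpose_def mat_def sx)
    have Ddiag: "\<And>i. D$i$i = 0" unfolding D_def using elliptopeD(3)[OF X] by (simp add: mat_def)
    have Db: "\<And>i j. \<bar>D$i$j\<bar> \<le> 1"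
      unfolding D_def using entry_bound[OF X] elliptopeD(3)[OF X] by (simp add: mat_def)
    have dec: "(\<Sum>i\<in>UNIV. \<Sum>j\<in>UNIV. D$i$j *\<^sub>R Sm i j) = D" by (rule decomp[OF Dsym Ddiag])
    define x where "x = (\<lambda>(i,j). Cm + D$i$j *\<^sub>R Sm i j)"
    have sumpair: "\<And>g :: 'n \<times> 'n \<Rightarrow> 'c::comm_monoid_add. (\<Sum>p\<in>UNIV. g p) = (\<Sum>i\<in>UNIV. \<Sum>j\<in>UNIV. g (i,j))"
      by (subst UNIV_Times_UNIV[symmetric], rule sum.cartesian_product')
    have cardp: "(\<Sum>p\<in>(UNIV::('n\<times>'n) set). e) = 1"
      using eM unfolding M_def by (simp add: card_prod)
    have pt: "(1 - e) *\<^sub>R Cm + e *\<^sub>R X = (\<Sum>p\<in>UNIV. e *\<^sub>R x p)"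
    proof -
      have "(\<Sum>p\<in>UNIV. e *\<^sub>R x p) = (\<Sum>i\<in>UNIV. \<Sum>j\<in>UNIV. e *\<^sub>R Cm + e *\<^sub>R (D$i$j *\<^sub>R Sm i j))"
        unfolding sumpair x_def by (simp add: scaleR_add_right)
      also have "\<dots> = (\<Sum>i\<in>(UNIV::'n set). \<Sum>j\<in>(UNIV::'n set). e *\<^sub>R Cm) + e *\<^sub>R (\<Sum>i\<in>UNIV. \<Sum>j\<in>UNIV. D$i$j *\<^sub>R Sm i j)"
        by (simp add: sum.distrib scaleR_sum_right)
      also have "\<dots> = (M * e) *\<^sub>R Cm + e *\<^sub>R D" unfolding dec M_def by (simp add: sum_constant_scaleR del: sum_constant)
      also have "\<dots> = (1 - e) *\<^sub>R Cm + e *\<^sub>R X" unfolding eM D_def by (simp add: algebra_simps)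
      finally show ?thesis by simp
    qed
    have xin: "\<forall>p\<in>UNIV. x p \<in> elliptope" unfolding x_def using CS_in[OF Db] by auto
    have "f (\<Sum>p\<in>UNIV. e *\<^sub>R x p) = (\<Sum>p\<in>UNIV. e *\<^sub>R f (x p))"
      by (rule affine_sum[OF convex_elliptope f _ cardp]) (use e0 xin in auto)
    also have "\<dots> = (\<Sum>i\<in>UNIV. \<Sum>j\<in>UNIV. e *\<^sub>R f Cm + e *\<^sub>R (D$i$j *\<^sub>R (f (Cm + Sm i j) - f Cm)))"
      unfolding sumpair x_def using hom_S[OF f Db] by (simp add: scaleR_add_right)
    also have "\<dots> = (M * e) *\<^sub>R f Cm + e *\<^sub>R L D"
      unfolding L_def M_def by (simp add: sum.distrib scaleR_sum_right scaleR_sum_left[symmetric])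
    finally have r: "f (\<Sum>p\<in>UNIV. e *\<^sub>R x p) = f Cm + e *\<^sub>R L D" unfolding eM by simp
    have "f ((1 - e) *\<^sub>R Cm + e *\<^sub>R X) = (1 - e) *\<^sub>R f Cm + e *\<^sub>R f X"
      by (rule aff_at[OF f Cm_in X]) (use e0 e1 in auto)
    hence "(1 - e) *\<^sub>R f Cm + e *\<^sub>R f X = f Cm + e *\<^sub>R L D" using r pt by simp
    thus "f X = f Cm + L (X - Cm)" unfolding D_def by (rule vec_alg2[rotated]) (use e0 in auto)
  qed
  ultimately show ?thesis by blast
qed



definition ism :: "real^'n \<Rightarrow> real^'n^'n" where "ism s = (\<chi> i j. s$i * s$j)"
definition sgnv :: "real^'n \<Rightarrow> bool" where "sgnv s \<longleftrightarrow> (\<forall>i. s$i = 1 \<or> s$i = -1)"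

lemma ising_eq: "ising = {X. \<exists>s. sgnv s \<and> X = ism s}"
  unfolding ising_def ism_def sgnv_def by auto

lemma sgnv_sq: "sgnv s \<Longrightarrow> s$i * s$i = 1"
  unfolding sgnv_def by (metis mult_1 mult_minus1 minus_minus)

lemma ism_in: assumes "sgnv (s::real^'n)" shows "ism s \<in> elliptope"
  unfolding elliptope_def
proof (intro CollectI conjI allI)
  show "transpose (ism s) = ism s" by (simp add: vec_eq_iff transpose_def ism_def mult.commute)
  fix x :: "real^'n"
  have "x \<bullet> (ism s *v x) = (\<Sum>a\<in>UNIV. x$a * s$a) * (\<Sum>b\<in>UNIV. x$b * s$b)"
    unfolding qf_sum ism_def by (simp add: sum_product algebra_simps)
  thus "0 \<le> x \<bullet> (ism s *v x)" by simp
next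
  fix i show "ism s $ i $ i = 1" using sgnv_sq[OF assms] by (simp add: ism_def)
qed

lemma ising_sub: "ising \<subseteq> elliptope"
  unfolding ising_eq using ism_in by auto

lemma finite_ising: "finite (ising :: (real^'n^'n) set)"
proof -
  have "{s :: real^'n. sgnv s} \<subseteq> (\<lambda>f. \<chi> i. f i) ` (PiE UNIV (\<lambda>_. {1, -1}))"
  proof
    fix s :: "real^'n" assume "s \<in> {s. sgnv s}"
    hence "(\<lambda>i. s$i) \<in> PiE UNIV (\<lambda>_. {1, -1})" unfolding sgnv_def by auto
    thus "s \<in> (\<lambda>f. \<chi> i. f i) ` (PiE UNIV (\<lambda>_. {1, -1}))"
      by (rule rev_image_eqI) simp
  qed
  hence "finite {s :: real^'n. sgnv s}"
    by (rule finite_subset) (intro finite_imageI finite_PiE; simp)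
  hence "finite (ism ` {s :: real^'n. sgnv s})" by simp
  moreover have "ising = ism ` {s :: real^'n. sgnv s}" unfolding ising_eq by auto
  ultimately show ?thesis by simp
qed

definition sharp :: "real^'n^'n \<Rightarrow> bool" where
  "sharp X \<longleftrightarrow> (\<exists>(l :: real^'n^'n \<Rightarrow> real) c. linear l \<and> 0 < c \<and> (\<forall>Y\<in>elliptope. c * norm (Y - X) \<le> l (Y - X)))"

lemma norm_l1_mat: "norm (M :: real^'n^'n) \<le> (\<Sum>a\<in>UNIV. \<Sum>b\<in>UNIV. \<bar>M$a$b\<bar>)"
proof -
  have "norm M \<le> (\<Sum>a\<in>UNIV. norm (M$a))" unfolding norm_vec_def[of M] by (rule L2_set_le_sum) simp
  also have "\<dots> \<le> (\<Sum>a\<in>UNIV. \<Sum>b\<in>UNIV. \<bar>M$a$b\<bar>)"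
    by (rule sum_mono) (rule norm_le_l1_cart)
  finally show ?thesis .
qed

lemma ising_sharp: fixes X :: "real^'n^'n" assumes "X \<in> ising" shows "sharp X"
proof -
  obtain s where s: "sgnv s" and X: "X = ism s" using assms unfolding ising_eq by auto
  define l where "l D = - (\<Sum>a\<in>UNIV. \<Sum>b\<in>UNIV. s$a * s$b * D$a$b)" for D :: "real^'n^'n"
  have lin: "linear l" unfolding l_def
    by (rule linearI) (simp_all add: algebra_simps sum.distrib sum_distrib_left sum_negf)
  have "\<forall>Y\<in>elliptope. 1 * norm (Y - X) \<le> l (Y - X)"
  proof
    fix Y :: "real^'n^'n" assume Y: "Y \<in> elliptope"
    have ent: "\<bar>(Y - X)$a$b\<bar> = - (s$a * s$b * (Y - X)$a$b)" for a b
    proof -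
      have yb: "\<bar>Y$a$b\<bar> \<le> 1" by (rule entry_bound[OF Y])
      have sa: "s$a = 1 \<or> s$a = -1" and sb: "s$b = 1 \<or> s$b = -1" using s unfolding sgnv_def by auto
      show ?thesis using yb sa sb unfolding X ism_def by (auto simp: abs_if)
    qed
    have "norm (Y - X) \<le> (\<Sum>a\<in>UNIV. \<Sum>b\<in>UNIV. \<bar>(Y - X)$a$b\<bar>)" by (rule norm_l1_mat)
    also have "\<dots> = l (Y - X)" unfolding ent l_def by (simp add: sum_negf)
    finally show "1 * norm (Y - X) \<le> l (Y - X)" by simp
  qed
  thus ?thesis unfolding sharp_def using lin by (intro exI[of _ l] exI[of _ 1]) auto
qed



lemma G_diff:
  fixes X :: "real^'n^'n"
  assumes X: "X \<in> elliptope"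
  shows "transpose (X - Cm) = X - Cm" "\<And>i. (X - Cm)$i$i = 0"
proof -
  have sx: "\<And>i j. X$j$i = X$i$j" using elliptopeD(1)[OF X] by (metis sym_entry)
  show "transpose (X - Cm) = X - Cm" by (simp add: vec_eq_iff transpose_def mat_def sx)
  show "\<And>i. (X - Cm)$i$i = 0" using elliptopeD(3)[OF X] by (simp add: mat_def)
qed

lemma H_zero:
  fixes H :: "real^'n^'n \<Rightarrow> 'b::real_vector"
  assumes H: "linear H" and HS: "\<And>i j. H (Sm i j) = 0"
    and D: "transpose D = D" "\<And>i. D$i$i = 0"
  shows "H D = 0"
proof -
  have "H D = H (\<Sum>i\<in>UNIV. \<Sum>j\<in>UNIV. D$i$j *\<^sub>R Sm i j)" using decomp[OF D] by simp
  also have "\<dots> = 0" by (simp add: linear_sum[OF H] linear_cmul[OF H] HS)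
  finally show ?thesis .
qed

lemma Sm_same: "Sm i i = 0" by (simp add: Sm_def vec_eq_iff)

definition flip :: "'n \<Rightarrow> real^'n \<Rightarrow> real^'n" where "flip k v = (\<chi> a. if a = k then - v$a else v$a)"
definition onev :: "real^'n" where "onev = (\<chi> a. 1)"

lemma sgnv_onev: "sgnv onev" by (simp add: sgnv_def onev_def)
lemma sgnv_flip: "sgnv v \<Longrightarrow> sgnv (flip k v)" by (auto simp: sgnv_def flip_def)

lemma four_ising:
  fixes i j :: "'n::finite"
  assumes "i \<noteq> j"
  shows "8 *\<^sub>R Sm i j = (ism onev - Cm) - (ism (flip i onev) - Cm) - (ism (flip j onev) - Cm) + (ism (flip i (flip j onev)) - Cm)"
  using assms by (auto simp: vec_eq_iff Sm_def ism_def flip_def onev_def)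

lemma uniq:
  fixes \<sigma> \<tau> :: "real^'n^'n \<Rightarrow> real^'n^'n"
  assumes s: "\<sigma> \<in> Aut" and t: "\<tau> \<in> Aut" and eq: "\<forall>X\<in>ising. \<sigma> X = \<tau> X"
  shows "\<sigma> = \<tau>"
proof -
  have sa: "affine_map_on elliptope \<sigma>" and ta: "affine_map_on elliptope \<tau>"
    using s t unfolding Aut_def by auto
  obtain Ls where Ls: "linear Ls" "\<forall>X\<in>elliptope. \<sigma> X = \<sigma> Cm + Ls (X - Cm)" using lin_ext[OF sa] by blast
  obtain Lt where Lt: "linear Lt" "\<forall>X\<in>elliptope. \<tau> X = \<tau> Cm + Lt (X - Cm)" using lin_ext[OF ta] by blast
  define H where "H D = Ls D - Lt D" for D
  define hC where "hC = \<sigma> Cm - \<tau> Cm"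
  have H: "linear H" unfolding H_def
    by (rule linearI) (simp_all add: linear_add[OF Ls(1)] linear_add[OF Lt(1)] linear_cmul[OF Ls(1)] linear_cmul[OF Lt(1)] scaleR_diff_right)
  have hG: "\<sigma> X - \<tau> X = hC + H (X - Cm)" if "X \<in> elliptope" for X
    using Ls(2) Lt(2) that unfolding H_def hC_def by simp
  have hI: "H (ism v - Cm) = - hC" if "sgnv v" for v
  proof -
    have "ism v \<in> ising" unfolding ising_eq using that by auto
    hence "\<sigma> (ism v) - \<tau> (ism v) = 0" using eq by simp
    thus ?thesis using hG[OF ism_in[OF that]] by (simp add: algebra_simps eq_neg_iff_add_eq_0)
  qed
  have HS: "H (Sm i j) = 0" for i j
  proof (cases "i = j")
    case True thus ?thesis by (simp add: Sm_same linear_0[OF H])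
  next
    case False
    have "8 *\<^sub>R H (Sm i j) = H (8 *\<^sub>R Sm i j)" by (simp add: linear_cmul[OF H])
    also have "\<dots> = 0"
    proof -
      define A where "A = ism onev - (Cm :: real^'n^'n)"
      define B where "B = ism (flip i onev) - (Cm :: real^'n^'n)"
      define C where "C = ism (flip j onev) - (Cm :: real^'n^'n)"
      define E where "E = ism (flip i (flip j onev)) - (Cm :: real^'n^'n)"
      have "H A = - hC" "H B = - hC" "H C = - hC" "H E = - hC"
        unfolding A_def B_def C_def E_def by (simp_all add: hI sgnv_onev sgnv_flip)
      moreover have "8 *\<^sub>R Sm i j = A - B - C + E"
        unfolding A_def B_def C_def E_def by (rule four_ising[OF False])
      ultimately show ?thesis by (simp add: linear_add[OF H] linear_diff[OF H])
    qed
    finally show ?thesis by simp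
  qed
  have J: "ism onev \<in> elliptope" by (rule ism_in[OF sgnv_onev])
  have hC0: "hC = 0"
    using hI[OF sgnv_onev] H_zero[OF H HS G_diff[OF J]] by simp
  show ?thesis
  proof (rule extensionalityI)
    show "\<sigma> \<in> extensional elliptope" "\<tau> \<in> extensional elliptope" using s t unfolding Aut_def by auto
    fix X :: "real^'n^'n" assume X: "X \<in> elliptope"
    have "\<sigma> X - \<tau> X = 0" using hG[OF X] hC0 H_zero[OF H HS G_diff[OF X]] by simp
    thus "\<sigma> X = \<tau> X" by simp
  qed
qed



lemma congr_psd:
  fixes X P :: "real^'n^'n"
  assumes X: "X \<in> elliptope"
  shows "transpose (P ** X ** transpose P) = P ** X ** transpose P"
    "0 \<le> x \<bullet> ((P ** X ** transpose P) *v x)"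
proof -
  show "transpose (P ** X ** transpose P) = P ** X ** transpose P"
    using elliptopeD(1)[OF X] by (simp add: matrix_transpose_mul transpose_transpose matrix_mul_assoc)
  have "x \<bullet> ((P ** X ** transpose P) *v x) = x \<bullet> (P *v (X *v (transpose P *v x)))"
    by (simp only: matrix_vector_mul_assoc[symmetric])
  also have "\<dots> = (transpose P *v x) \<bullet> (X *v (transpose P *v x))"
    by (simp add: dot_lmul_matrix[symmetric] transpose_matrix_vector)
  finally show "0 \<le> x \<bullet> ((P ** X ** transpose P) *v x)" using elliptopeD(2)[OF X] by simp
qed

definition Pm :: "'n::finite \<Rightarrow> 'n \<Rightarrow> real \<Rightarrow> real \<Rightarrow> real^'n^'n" where
  "Pm i j \<alpha> \<beta> = (\<chi> a b. if a = i then (if b = i then \<alpha> else if b = j then \<beta> else 0) else (if a = b then 1 else 0))"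

lemma rowP:
  assumes "i \<noteq> j"
  shows "(\<Sum>k\<in>UNIV. Pm i j \<alpha> \<beta> $a$k * w k) = (if a = i then \<alpha> * w i + \<beta> * w j else w a)"
proof (cases "a = i")
  case True
  have e: "\<And>k. Pm i j \<alpha> \<beta> $a$k * w k = (if k = i then \<alpha> * w i else 0) + (if k = j then \<beta> * w j else 0)"
    using True assms by (auto simp: Pm_def)
  show ?thesis unfolding e using True by (simp add: sum.distrib)
next
  case False
  have e: "\<And>k. Pm i j \<alpha> \<beta> $a$k * w k = (if k = a then w a else 0)"
    using False by (auto simp: Pm_def)
  show ?thesis unfolding e using False by simp
qed

lemma congr_entry:
  fixes X :: "real^'n^'n"
  assumes "i \<noteq> j"
  shows "(Pm i j \<alpha> \<beta> ** X ** transpose (Pm i j \<alpha> \<beta>)) $a$b =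
    (if b = i then \<alpha> * (if a = i then \<alpha> * X$i$i + \<beta> * X$j$i else X$a$i) + \<beta> * (if a = i then \<alpha> * X$i$j + \<beta> * X$j$j else X$a$j)
     else (if a = i then \<alpha> * X$i$b + \<beta> * X$j$b else X$a$b))"
proof -
  have 1: "(Pm i j \<alpha> \<beta> ** X) $a$l = (if a = i then \<alpha> * X$i$l + \<beta> * X$j$l else X$a$l)" for a l
    unfolding matrix_matrix_mult_def using rowP[OF assms, of \<alpha> \<beta> a "\<lambda>k. X$k$l"] by simp
  have "(Pm i j \<alpha> \<beta> ** X ** transpose (Pm i j \<alpha> \<beta>)) $a$b = (\<Sum>l\<in>UNIV. Pm i j \<alpha> \<beta> $b$l * (Pm i j \<alpha> \<beta> ** X)$a$l)"
    unfolding matrix_matrix_mult_def[of "Pm i j \<alpha> \<beta> ** X"] by (simp add: transpose_def mult.commute)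
  also have "\<dots> = (if b = i then \<alpha> * (Pm i j \<alpha> \<beta> ** X)$a$i + \<beta> * (Pm i j \<alpha> \<beta> ** X)$a$j else (Pm i j \<alpha> \<beta> ** X)$a$b)"
    by (rule rowP[OF assms])
  finally show ?thesis unfolding 1 .
qed



definition Zm :: "real^'n^'n \<Rightarrow> 'n \<Rightarrow> real^'n^'n" where
  "Zm X i = (\<chi> a b. if (a = i) \<noteq> (b = i) then X$a$b else 0)"
definition Vm :: "real^'n^'n \<Rightarrow> 'n \<Rightarrow> 'n \<Rightarrow> real^'n^'n" where
  "Vm X i j = (\<chi> a b. if a = i \<and> b \<noteq> i then X$j$b - X$i$j * X$i$b
                     else if b = i \<and> a \<noteq> i then X$a$j - X$i$j * X$a$i else 0)"

lemma curve_in: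
  fixes X :: "real^'n^'n"
  assumes X: "X \<in> elliptope" and ij: "i \<noteq> j" and c: "\<bar>X$i$j\<bar> < 1" and km: "\<kappa>*\<kappa> + \<mu>*\<mu> = 1"
  shows "X + (\<kappa> - 1) *\<^sub>R Zm X i + (\<mu> / sqrt (1 - X$i$j * X$i$j)) *\<^sub>R Vm X i j \<in> elliptope"
proof -
  define cc where "cc = X$i$j"
  define r where "r = sqrt (1 - cc * cc)"
  have cc1: "cc * cc < 1" using c unfolding cc_def by (metis abs_mult_less abs_mult_self_eq mult_1)
  have r0: "0 < r" unfolding r_def using cc1 by simp
  have rr: "r * r = 1 - cc * cc" unfolding r_def using cc1 by simp
  define \<beta> where "\<beta> = \<mu> / r"
  define \<alpha> where "\<alpha> = \<kappa> - cc * \<beta>"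
  have br: "\<beta> * r = \<mu>" unfolding \<beta>_def using r0 by simp
  have sx: "\<And>a b. X$b$a = X$a$b" using elliptopeD(1)[OF X] by (metis sym_entry)
  have dx: "\<And>a. X$a$a = 1" using elliptopeD(3)[OF X] by simp
  have one: "\<alpha> * (\<alpha> * 1 + \<beta> * cc) + \<beta> * (\<alpha> * cc + \<beta> * 1) = 1"
  proof -
    have "\<alpha> * (\<alpha> * 1 + \<beta> * cc) + \<beta> * (\<alpha> * cc + \<beta> * 1) = \<kappa> * \<kappa> + \<beta> * \<beta> * (1 - cc * cc)"
      unfolding \<alpha>_def by (simp add: algebra_simps)
    also have "\<dots> = \<kappa> * \<kappa> + (\<beta> * r) * (\<beta> * r)" unfolding rr[symmetric] by (simp add: algebra_simps)
    finally have "\<alpha> * (\<alpha> * 1 + \<beta> * cc) + \<beta> * (\<alpha> * cc + \<beta> * 1) = \<kappa> * \<kappa> + (\<beta> * r) * (\<beta> * r)" .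
    thus ?thesis using br km by simp
  qed
  define Y where "Y = X + (\<kappa> - 1) *\<^sub>R Zm X i + \<beta> *\<^sub>R Vm X i j"
  have YP: "Pm i j \<alpha> \<beta> ** X ** transpose (Pm i j \<alpha> \<beta>) = Y"
    unfolding vec_eq_iff
  proof (intro allI)
    fix a b
    show "(Pm i j \<alpha> \<beta> ** X ** transpose (Pm i j \<alpha> \<beta>)) $ a $ b = Y $ a $ b"
      unfolding congr_entry[OF ij] Y_def
      using one ij sx[of i j] dx[of i] dx[of j]
      by (auto simp: Zm_def Vm_def \<alpha>_def cc_def algebra_simps)
  qed
  have "Y \<in> elliptope"
    unfolding elliptope_def
  proof (intro CollectI conjI allI)
    show "transpose Y = Y" using congr_psd(1)[OF X, where P="Pm i j \<alpha> \<beta>"] unfolding YP .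
    fix x :: "real^'n" show "0 \<le> x \<bullet> (Y *v x)" using congr_psd(2)[OF X, where P="Pm i j \<alpha> \<beta>" and x=x] unfolding YP .
  next
    fix a show "Y $ a $ a = 1" unfolding Y_def using dx by (simp add: Zm_def Vm_def)
  qed
  thus ?thesis unfolding Y_def \<beta>_def r_def cc_def .
qed



lemma entry_le_norm: "\<bar>(M::real^'n^'n)$i$j\<bar> \<le> norm M"
proof -
  have "\<bar>M$i$j\<bar> = norm (M$i$j)" by simp
  also have "\<dots> \<le> norm (M$i)" using component_le_norm_cart[of "M$i" j] by simp
  also have "\<dots> \<le> norm M" unfolding norm_vec_def[of M] by (rule member_le_L2_set) simp_all
  finally show ?thesis .
qed

lemma abs_pm: "2 * \<bar>b\<bar> \<le> \<bar>a + b\<bar> + \<bar>a - (b::real)\<bar>" by linarith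

lemma not_sharp:
  fixes X :: "real^'n^'n"
  assumes X: "X \<in> elliptope" and ij: "i \<noteq> j" and c: "\<bar>X$i$j\<bar> < 1"
  shows "\<not> sharp X"
proof
  assume "sharp X"
  then obtain l :: "real^'n^'n \<Rightarrow> real" and C0 where l: "linear l" and C0: "0 < C0"
    and sh: "\<forall>Y\<in>elliptope. C0 * norm (Y - X) \<le> l (Y - X)"
    unfolding sharp_def by blast
  define cc where "cc = X$i$j"
  define r where "r = sqrt (1 - cc * cc)"
  have cc1: "cc * cc < 1" using c unfolding cc_def by (metis abs_mult_less abs_mult_self_eq mult_1)
  have r0: "0 < r" unfolding r_def using cc1 by simp
  have rr: "r * r = 1 - cc * cc" unfolding r_def using cc1 by simp
  define lZ where "lZ = l (Zm X i)"
  define lV where "lV = l (Vm X i j)"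
  define u where "u = C0 * r / (2 * (\<bar>lZ\<bar> + 1))"
  have u0: "0 < u" unfolding u_def using C0 r0 by (simp add: add_pos_nonneg)
  have ulz: "u * \<bar>lZ\<bar> < C0 * r"
  proof -
    have "u * \<bar>lZ\<bar> = C0 * r * (\<bar>lZ\<bar> / (2 * (\<bar>lZ\<bar> + 1)))" unfolding u_def by simp
    also have "\<dots> < C0 * r * 1"
      by (rule mult_strict_left_mono) (use C0 r0 in \<open>auto simp: field_simps\<close>)
    finally show ?thesis by simp
  qed
  define \<kappa> where "\<kappa> = (1 - u*u) / (1 + u*u)"
  define \<mu> where "\<mu> = 2*u / (1 + u*u)"
  have pos: "0 < 1 + u*u" by (simp add: add_pos_nonneg)
  have num: "(1 - u*u)*(1-u*u) + (2*u)*(2*u) = (1+u*u)*(1+u*u)" by (simp add: algebra_simps)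
  have km: "\<kappa>*\<kappa> + \<mu>*\<mu> = 1"
  proof -
    have "\<kappa>*\<kappa> + \<mu>*\<mu> = ((1 - u*u)*(1-u*u) + (2*u)*(2*u)) / ((1+u*u)*(1+u*u))"
      unfolding \<kappa>_def \<mu>_def by (simp add: add_divide_distrib)
    also have "\<dots> = 1" unfolding num using pos by simp
    finally show ?thesis .
  qed
  have km': "\<kappa>*\<kappa> + (-\<mu>)*(-\<mu>) = 1" using km by simp
  have Zij: "Zm X i $i$j = cc" unfolding Zm_def cc_def using ij by simp
  have Vij: "Vm X i j $i$j = 1 - cc * cc" unfolding Vm_def cc_def using ij elliptopeD(3)[OF X] by simp
  have key: "C0 * \<bar>(\<kappa> - 1) * cc + s * (1 - cc * cc)\<bar> \<le> (\<kappa> - 1) * lZ + s * lV"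
    if "s = \<mu> / r \<or> s = (-\<mu>) / r" for s
  proof -
    define Y where "Y = X + (\<kappa> - 1) *\<^sub>R Zm X i + s *\<^sub>R Vm X i j"
    have Y: "Y \<in> elliptope" unfolding Y_def using that
      curve_in[OF X ij c km] curve_in[OF X ij c km'] unfolding r_def cc_def by auto
    have YX: "Y - X = (\<kappa> - 1) *\<^sub>R Zm X i + s *\<^sub>R Vm X i j" unfolding Y_def by simp
    have "C0 * \<bar>(Y - X)$i$j\<bar> \<le> C0 * norm (Y - X)"
      by (rule mult_left_mono[OF entry_le_norm]) (use C0 in simp)
    also have "\<dots> \<le> l (Y - X)" using sh Y by blast
    also have "\<dots> = (\<kappa> - 1) * lZ + s * lV"
      unfolding YX lZ_def lV_def by (simp add: linear_add[OF l] linear_cmul[OF l])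
    finally show ?thesis unfolding YX using Zij Vij by simp
  qed
  have k1: "C0 * \<bar>(\<kappa> - 1) * cc + (\<mu> / r) * (1 - cc * cc)\<bar> \<le> (\<kappa> - 1) * lZ + (\<mu> / r) * lV"
    using key by blast
  have k2: "C0 * \<bar>(\<kappa> - 1) * cc + ((-\<mu>) / r) * (1 - cc * cc)\<bar> \<le> (\<kappa> - 1) * lZ + ((-\<mu>) / r) * lV"
    using key by blast
  define A where "A = (\<kappa> - 1) * cc"
  define B where "B = (\<mu> / r) * (1 - cc * cc)"
  have k2': "C0 * \<bar>A - B\<bar> \<le> (\<kappa> - 1) * lZ - (\<mu> / r) * lV"
    using k2 unfolding A_def B_def by (simp add: algebra_simps)
  have k1': "C0 * \<bar>A + B\<bar> \<le> (\<kappa> - 1) * lZ + (\<mu> / r) * lV"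
    using k1 unfolding A_def B_def by simp
  have "C0 * (2 * \<bar>B\<bar>) \<le> C0 * (\<bar>A + B\<bar> + \<bar>A - B\<bar>)"
    by (rule mult_left_mono[OF abs_pm]) (use C0 in simp)
  also have "\<dots> \<le> 2 * ((\<kappa> - 1) * lZ)" using k1' k2' by (simp add: distrib_left)
  finally have s1: "C0 * \<bar>B\<bar> \<le> (\<kappa> - 1) * lZ" by simp
  have mu0: "0 < \<mu>" unfolding \<mu>_def using u0 pos by simp
  have B: "B = \<mu> * r" unfolding B_def rr[symmetric] using r0 by simp
  have Bab: "\<bar>B\<bar> = \<mu> * r" unfolding B using mu0 r0 by simp
  have km1: "\<kappa> - 1 = - (u * \<mu>)" unfolding \<kappa>_def \<mu>_def using pos by (simp add: field_simps)
  have "\<mu> * (C0 * r) \<le> \<mu> * (- (u * lZ))" using s1 unfolding Bab km1 by (simp add: algebra_simps)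
  hence "C0 * r \<le> - (u * lZ)" using mu0 by (rule mult_left_le_imp_le)
  also have "\<dots> \<le> u * \<bar>lZ\<bar>" using u0 by (simp add: abs_if)
  finally show False using ulz by simp
qed



lemma bil_sum: "(x::real^'n) \<bullet> (A *v y) = (\<Sum>a\<in>UNIV. \<Sum>b\<in>UNIV. x$a * A$a$b * y$b)"
  by (simp add: inner_vec_def matrix_vector_mult_def sum_distrib_left mult.assoc mult.left_commute)

lemma psd_null:
  fixes X :: "real^'n^'n"
  assumes X: "X \<in> elliptope" and z: "x \<bullet> (X *v x) = 0"
  shows "y \<bullet> (X *v x) = 0"
proof -
  have sx: "\<And>a b. X$b$a = X$a$b" using elliptopeD(1)[OF X] by (metis sym_entry)
  have sym: "x \<bullet> (X *v y) = y \<bullet> (X *v x)"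
    unfolding bil_sum by (subst sum.swap) (simp add: sx mult.commute mult.left_commute)
  define b where "b = y \<bullet> (X *v x)"
  define a where "a = y \<bullet> (X *v y)"
  have a0: "0 \<le> a" unfolding a_def using elliptopeD(2)[OF X] by simp
  have h: "0 \<le> 2*t*b + t*t*a" for t
  proof -
    have "(x + t *\<^sub>R y) \<bullet> (X *v (x + t *\<^sub>R y)) = x \<bullet> (X *v x) + t * (x \<bullet> (X *v y)) + t * (y \<bullet> (X *v x)) + t*t*(y \<bullet> (X *v y))"
      by (simp add: matrix_vector_right_distrib inner_add_left inner_add_right
       algebra_simps matrix_scaleR_vector_ac[symmetric])
    moreover have "0 \<le> (x + t *\<^sub>R y) \<bullet> (X *v (x + t *\<^sub>R y))" using elliptopeD(2)[OF X] by simp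
    ultimately show ?thesis using z sym unfolding a_def b_def by (simp add: algebra_simps)
  qed
  define t where "t = - b / (a + 1)"
  have a1: "a + 1 \<noteq> 0" using a0 by simp
  have ta: "t * (a + 1) = - b" unfolding t_def using a1 by simp
  have "(a+1)*(a+1)*(2*t*b + t*t*a) = 2*b*(a+1)*(t*(a+1)) + a*(t*(a+1))*(t*(a+1))" by (simp add: algebra_simps)
  also have "\<dots> = - (b*b*(a+2))" unfolding ta by (simp add: algebra_simps)
  finally have e: "(a+1)*(a+1)*(2*t*b + t*t*a) = - (b*b*(a+2))" .
  have "0 \<le> (a+1)*(a+1)*(2*t*b + t*t*a)" using h[of t] by simp
  hence "b*b*(a+2) \<le> 0" unfolding e by simp
  hence "b * b \<le> 0" using a0 by (simp add: mult_le_0_iff)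
  hence "b = 0" by (metis mult_eq_0_iff not_square_less_zero order_antisym_conv zero_le_square)
  thus ?thesis unfolding b_def .
qed

lemma mv_scale: "(X::real^'n^'n) *v (p *\<^sub>R v) = p *\<^sub>R (X *v v)"
  by (simp add: matrix_vector_mult_def vec_eq_iff sum_distrib_left mult.left_commute)

lemma axis_qf: "axis b 1 \<bullet> ((X::real^'n^'n) *v (p *\<^sub>R axis a 1 + q *\<^sub>R axis c 1)) = p * X$b$a + q * X$b$c"
  by (simp add: matrix_vector_right_distrib matrix_vector_mult_basis inner_add_right
       inner_axis' column_def mv_scale)

lemma pm1_ising:
  fixes X :: "real^'n^'n"
  assumes X: "X \<in> elliptope" and pm: "\<And>i j. i \<noteq> j \<Longrightarrow> \<bar>X$i$j\<bar> = 1"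
  shows "X \<in> ising"
proof -
  have sx: "\<And>a b. X$b$a = X$a$b" using elliptopeD(1)[OF X] by (metis sym_entry)
  have dx: "\<And>a. X$a$a = 1" using elliptopeD(3)[OF X] by simp
  obtain a0 :: 'n where True by simp
  define s where "s = (\<chi> b. X$a0$b)"
  have sg: "sgnv s" unfolding sgnv_def s_def
  proof
    fix b show "(\<chi> b. X$a0$b) $ b = 1 \<or> (\<chi> b. X$a0$b) $ b = -1"
      using pm[of a0 b] dx[of a0] by (cases "a0 = b") (auto simp: abs_if split: if_splits)
  qed
  have sv: "\<And>b. s$b = X$a0$b" unfolding s_def by simp
  have "X = ism s"
    unfolding vec_eq_iff
  proof (intro allI)
    fix a b
    show "X$a$b = ism s $a$b"
    proof -
      consider "a = b" | "a \<noteq> b" "a = a0" | "a \<noteq> b" "b = a0" | "a \<noteq> b" "a \<noteq> a0" "b \<noteq> a0" by blast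
      thus ?thesis
      proof cases
        case 1 thus ?thesis using sgnv_sq[OF sg, of a] dx by (simp add: ism_def)
      next
        case 2 thus ?thesis using dx by (simp add: ism_def sv)
      next
        case 3 thus ?thesis using dx sx by (simp add: ism_def sv)
      next
        case 4
        define x where "x = 1 *\<^sub>R axis a 1 + (- s$a) *\<^sub>R axis a0 (1::real)"
        have ssq: "s$a * s$a = 1" by (rule sgnv_sq[OF sg])
        have "x \<bullet> (X *v x) = 1*1*X$a$a + 1*(- s$a)*X$a$a0 + (- s$a)*1*X$a0$a + (- s$a)*(- s$a)*X$a0$a0"
          unfolding x_def by (rule qf2)
        also have "\<dots> = 1 - s$a * s$a" using dx sx[of a a0] by (simp add: sv algebra_simps)
        finally have "x \<bullet> (X *v x) = 0" using ssq by simp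
        hence "axis b 1 \<bullet> (X *v x) = 0" by (rule psd_null[OF X])
        hence "X$b$a = s$a * X$b$a0" unfolding x_def axis_qf by simp
        thus ?thesis using sx by (simp add: ism_def sv)
      qed
    qed
  qed
  thus ?thesis unfolding ising_eq using sg by auto
qed

lemma sharp_ising:
  fixes X :: "real^'n^'n"
  assumes X: "X \<in> elliptope" and sh: "sharp X"
  shows "X \<in> ising"
proof (rule pm1_ising[OF X])
  fix i j :: 'n assume ij: "i \<noteq> j"
  have "\<bar>X$i$j\<bar> \<le> 1" by (rule entry_bound[OF X])
  moreover have "\<not> \<bar>X$i$j\<bar> < 1" using not_sharp[OF X ij] sh by blast
  ultimately show "\<bar>X$i$j\<bar> = 1" by simp
qed



lemma inv_affine:
  fixes \<sigma> :: "real^'n^'n \<Rightarrow> real^'n^'n"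
  assumes s: "\<sigma> \<in> Aut"
  shows "affine_map_on elliptope (inv_into elliptope \<sigma>)"
proof -
  have bij: "bij_betw \<sigma> elliptope elliptope" and aff: "affine_map_on elliptope \<sigma>"
    using s unfolding Aut_def by auto
  have inj: "inj_on \<sigma> elliptope" and img: "\<sigma> ` elliptope = elliptope"
    using bij unfolding bij_betw_def by auto
  show ?thesis unfolding affine_map_on_def
  proof (intro ballI allI impI)
    fix x y :: "real^'n^'n" and t :: real
    assume x: "x \<in> elliptope" and y: "y \<in> elliptope" and t: "0 \<le> t \<and> t \<le> 1"
    define x' where "x' = inv_into elliptope \<sigma> x"
    define y' where "y' = inv_into elliptope \<sigma> y"
    have x': "x' \<in> elliptope" "\<sigma> x' = x" unfolding x'_def using x img
      by (auto intro: inv_into_into f_inv_into_f)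
    have y': "y' \<in> elliptope" "\<sigma> y' = y" unfolding y'_def using y img
      by (auto intro: inv_into_into f_inv_into_f)
    have z: "(1 - t) *\<^sub>R x' + t *\<^sub>R y' \<in> elliptope"
      using convex_elliptope x'(1) y'(1) t unfolding convex_def by auto
    have "\<sigma> ((1 - t) *\<^sub>R x' + t *\<^sub>R y') = (1 - t) *\<^sub>R x + t *\<^sub>R y"
      using aff_at[OF aff x'(1) y'(1)] t x'(2) y'(2) by auto
    hence "inv_into elliptope \<sigma> ((1 - t) *\<^sub>R x + t *\<^sub>R y) = (1 - t) *\<^sub>R x' + t *\<^sub>R y'"
      using inv_into_f_f[OF inj z] by simp
    thus "inv_into elliptope \<sigma> ((1 - t) *\<^sub>R x + t *\<^sub>R y) =
      (1 - t) *\<^sub>R inv_into elliptope \<sigma> x + t *\<^sub>R inv_into elliptope \<sigma> y"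
      unfolding x'_def y'_def .
  qed
qed

lemma lin_diff:
  fixes f :: "real^'n^'n \<Rightarrow> 'b::real_vector"
  assumes f: "affine_map_on elliptope f"
  obtains L where "linear L" "\<And>X Y. X \<in> elliptope \<Longrightarrow> Y \<in> elliptope \<Longrightarrow> f X - f Y = L (X - Y)"
proof -
  obtain L where L: "linear L" "\<forall>X\<in>elliptope. f X = f Cm + L (X - Cm)" using lin_ext[OF f] by blast
  have "f X - f Y = L (X - Y)" if "X \<in> elliptope" "Y \<in> elliptope" for X Y
  proof -
    have "f X - f Y = L (X - Cm) - L (Y - Cm)" using L(2) that by simp
    also have "\<dots> = L ((X - Cm) - (Y - Cm))" by (simp add: linear_diff[OF L(1)])
    finally show ?thesis by simp
  qed
  thus ?thesis using that L(1) by blast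
qed

lemma maps_ising:
  fixes \<sigma> :: "real^'n^'n \<Rightarrow> real^'n^'n"
  assumes s: "\<sigma> \<in> Aut" and X: "X \<in> ising"
  shows "\<sigma> X \<in> ising"
proof -
  have bij: "bij_betw \<sigma> elliptope elliptope" and aff: "affine_map_on elliptope \<sigma>"
    using s unfolding Aut_def by auto
  have inj: "inj_on \<sigma> elliptope" and img: "\<sigma> ` elliptope = elliptope"
    using bij unfolding bij_betw_def by auto
  have XG: "X \<in> elliptope" using X ising_sub by auto
  have sXG: "\<sigma> X \<in> elliptope" using XG img by auto
  define \<tau> where "\<tau> = inv_into elliptope \<sigma>"
  have taff: "affine_map_on elliptope \<tau>" unfolding \<tau>_def by (rule inv_affine[OF s])
  obtain Ls where Ls: "linear Ls" "\<And>X Y. X \<in> elliptope \<Longrightarrow> Y \<in> elliptope \<Longrightarrow> \<sigma> X - \<sigma> Y = Ls (X - Y)"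
    using lin_diff[OF aff] by blast
  obtain Lt where Lt: "linear Lt" "\<And>X Y. X \<in> elliptope \<Longrightarrow> Y \<in> elliptope \<Longrightarrow> \<tau> X - \<tau> Y = Lt (X - Y)"
    using lin_diff[OF taff] by blast
  obtain B where B: "0 < B" "\<And>x. norm (Ls x) \<le> B * norm x" using linear_bounded_pos[OF Ls(1)] by blast
  obtain l c where l: "linear l" and c: "0 < c" and sh: "\<forall>Y\<in>elliptope. c * norm (Y - X) \<le> l (Y - X)"
    using ising_sharp[OF X] unfolding sharp_def by blast
  have "sharp (\<sigma> X)"
    unfolding sharp_def
  proof (intro exI conjI)
    show "linear (l \<circ> Lt)" by (rule linear_compose[OF Lt(1) l])
    show "0 < c / B" using c B by simp
    show "\<forall>Y'\<in>elliptope. c / B * norm (Y' - \<sigma> X) \<le> (l \<circ> Lt) (Y' - \<sigma> X)"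
    proof
      fix Y' :: "real^'n^'n" assume Y': "Y' \<in> elliptope"
      define Y where "Y = \<tau> Y'"
      have Y: "Y \<in> elliptope" "\<sigma> Y = Y'" unfolding Y_def \<tau>_def using Y' img
        by (auto intro: inv_into_into f_inv_into_f)
      have tX: "\<tau> (\<sigma> X) = X" unfolding \<tau>_def by (rule inv_into_f_f[OF inj XG])
      have "(l \<circ> Lt) (Y' - \<sigma> X) = l (\<tau> Y' - \<tau> (\<sigma> X))" using Lt(2)[OF Y' sXG] by simp
      also have "\<dots> = l (Y - X)" using tX Y_def by simp
      finally have e1: "(l \<circ> Lt) (Y' - \<sigma> X) = l (Y - X)" .
      have "norm (Y' - \<sigma> X) = norm (Ls (Y - X))" using Ls(2)[OF Y(1) XG] Y(2) by simp
      also have "\<dots> \<le> B * norm (Y - X)" by (rule B(2))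
      finally have n: "norm (Y' - \<sigma> X) \<le> B * norm (Y - X)" .
      have "c / B * norm (Y' - \<sigma> X) \<le> c / B * (B * norm (Y - X))"
        by (rule mult_left_mono[OF n]) (use c B in simp)
      also have "\<dots> = c * norm (Y - X)" using B by simp
      also have "\<dots> \<le> l (Y - X)" using sh Y(1) by blast
      finally show "c / B * norm (Y' - \<sigma> X) \<le> (l \<circ> Lt) (Y' - \<sigma> X)" using e1 by simp
    qed
  qed
  thus ?thesis by (rule sharp_ising[OF sXG])
qed

theorem lemma9:
  shows "finite (Aut :: (real^'n^'n \<Rightarrow> real^'n^'n) set) \<and>
    (\<forall>\<sigma>\<in>(Aut :: (real^'n^'n \<Rightarrow> real^'n^'n) set). \<forall>\<tau>\<in>Aut.
        (\<forall>X\<in>ising. \<sigma> X = \<tau> X) \<longrightarrow> \<sigma> = \<tau>)"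
proof
  show U: "\<forall>\<sigma>\<in>(Aut :: (real^'n^'n \<Rightarrow> real^'n^'n) set). \<forall>\<tau>\<in>Aut.
        (\<forall>X\<in>ising. \<sigma> X = \<tau> X) \<longrightarrow> \<sigma> = \<tau>"
    using uniq by blast
  have inj: "inj_on (\<lambda>\<sigma>. restrict \<sigma> ising) (Aut :: (real^'n^'n \<Rightarrow> real^'n^'n) set)"
  proof (rule inj_onI)
    fix \<sigma> \<tau> :: "real^'n^'n \<Rightarrow> real^'n^'n"
    assume s: "\<sigma> \<in> Aut" and t: "\<tau> \<in> Aut" and e: "restrict \<sigma> ising = restrict \<tau> ising"
    have "\<forall>X\<in>ising. \<sigma> X = \<tau> X"
    proof
      fix X :: "real^'n^'n" assume "X \<in> ising"
      thus "\<sigma> X = \<tau> X" using fun_cong[OF e, of X] by simp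
    qed
    thus "\<sigma> = \<tau>" using uniq[OF s t] by blast
  qed
  have sub: "(\<lambda>\<sigma>. restrict \<sigma> ising) ` (Aut :: (real^'n^'n \<Rightarrow> real^'n^'n) set) \<subseteq> PiE ising (\<lambda>_. ising)"
    using maps_ising by (auto simp: PiE_iff)
  have "finite (PiE (ising :: (real^'n^'n) set) (\<lambda>_. ising))"
    by (intro finite_PiE finite_ising)
  hence "finite ((\<lambda>\<sigma>. restrict \<sigma> ising) ` (Aut :: (real^'n^'n \<Rightarrow> real^'n^'n) set))"
    using sub finite_subset by blast
  thus "finite (Aut :: (real^'n^'n \<Rightarrow> real^'n^'n) set)" using finite_imageD inj by blast
qed


end
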